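(* Let $n$ be even and $S\ge2$. Any randomized AMPC algorithm with I/O capacity $S$ that computes $\mathrm{1v2Cycle}$ on $n$ vertices with error at most $1/6$ requires at least $\frac16\log_S n-\frac12\log_S 2=\Omega(\log_S n)$ rounds. In particular, if $S=n^\epsilon$ for $\epsilon\in(0,1)$, any such algorithm requires $\Omega(1/\epsilon)$ rounds.
   Context: Graphs on vertex set $\{1,\dots,n\}$ are encoded as $x\in\{0,1\}^N$, $N=\binom n2$, one bit per unordered pair (adjacency matrix). $\mathrm{1v2Cycle}:\Delta\to\{0,1\}$ is defined on the set $\Delta$ of graphs that are either a single $n$-cycle (value $1$) or a disjoint union of two cycles of length $n/2$ (value $0$). AMPC model with I/O capacity $S$: computation proceeds in rounds communicating through distributed data stores (DDS) $\mathcal{D}_0,\dots,\mathcal{D}_R$, each storing under each key a multiset of values (possibly empty; duplicates allowed, each value written by a unique machine). On input $x$, $\mathcal{D}_0$ consists of the pairs $(i,x_i)$, $i=1,\dots,N$. In round $r\ge1$ each machine (arbitrarily many, computationally unbounded, deterministic) adaptively queries keys of $\mathcal{D}_{r-1}$, receiving the whole multiset under the key, with later queries depending arbitrarily on earlier ones and their responses; the total number of values in responses plus the number of empty-response queries is at most $S$; it then writes at most $S$ key-value pairs to $\mathcal{D}_r$ as a function of its queries and responses. Algorithms are also run on invalid inputs $x\in\{0,1\}^N\setminus\Delta$ (a machine exceeding its budget stops and writes nothing), and in every round, on every input in $\{0,1\}^N$, at most $S$ values are written under any single key. A deterministic algorithm outputs $b$ on $x$ if $\mathcal{D}_R$ contains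 exactly the single pair $(\textsc{answer},b)$. A randomized AMPC algorithm is a probability distribution over deterministic AMPC algorithms; its number of rounds is the maximum over its support; it computes $g$ with error at most $\delta$ if for each $x\in\Delta$ it outputs $g(x)$ with probability at least $1-\delta$. *)

theory Defs
  imports "HOL-Probability.Probability"
begin

text \<open>Input bits are indexed by 1..N, N = n choose 2; the bit with index i is the
  adjacency bit of the unordered pair pair_of i (an encoding bijection, which the
  theorem quantifies over).  Inputs are functions nat => bool; only indices 1..N matter.\<close>

definition edges_of :: "nat \<Rightarrow> (nat \<Rightarrow> nat set) \<Rightarrow> (nat \<Rightarrow> bool) \<Rightarrow> nat set set" where
  "edges_of n pair_of x = {pair_of i | i. i \<in> {1..n choose 2} \<and> x i}"

definition cycle_edges :: "nat list \<Rightarrow> nat set set" where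
  "cycle_edges vs = {{vs ! i, vs ! ((i + 1) mod length vs)} | i. i < length vs}"

definition single_cycle :: "nat \<Rightarrow> nat set set \<Rightarrow> bool" where
  "single_cycle n E \<longleftrightarrow> (\<exists>vs. distinct vs \<and> set vs = {1..n} \<and> length vs \<ge> 3
      \<and> E = cycle_edges vs)"

definition two_cycles :: "nat \<Rightarrow> nat set set \<Rightarrow> bool" where
  "two_cycles n E \<longleftrightarrow> (\<exists>vs ws. distinct (vs @ ws) \<and> set (vs @ ws) = {1..n}
      \<and> length vs = n div 2 \<and> length ws = n div 2 \<and> n div 2 \<ge> 3
      \<and> E = cycle_edges vs \<union> cycle_edges ws)"

definition in_Delta :: "nat \<Rightarrow> (nat \<Rightarrow> nat set) \<Rightarrow> (nat \<Rightarrow> bool) \<Rightarrow> bool" where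
  "in_Delta n pair_of x \<longleftrightarrow>
     single_cycle n (edges_of n pair_of x) \<or> two_cycles n (edges_of n pair_of x)"

definition one_vs_two_cycle :: "nat \<Rightarrow> (nat \<Rightarrow> nat set) \<Rightarrow> (nat \<Rightarrow> bool) \<Rightarrow> nat" where
  "one_vs_two_cycle n pair_of x = (if single_cycle n (edges_of n pair_of x) then 1 else 0)"

text \<open>Keys and values are natural numbers (any finite data can be encoded).  Keys 1..N
  carry the input in the initial DDS; key 0 is the special key ANSWER.\<close>

type_synonym dds = "nat \<Rightarrow> nat multiset"
type_synonym hist = "(nat \<times> nat multiset) list"

datatype action = Query nat | Write "(nat \<times> nat) list"

text \<open>A deterministic, computationally unbounded, adaptive machine: given the history of
  its queries and the responses, it either issues the next query or writes its output.\<close>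
type_synonym machine = "hist \<Rightarrow> action"
type_synonym round = "nat \<Rightarrow> machine"
type_synonym alg = "round list"

definition answer_key :: nat where "answer_key = 0"

definition query_cost :: "hist \<Rightarrow> nat" where
  "query_cost h = sum_list (map (\<lambda>(k, r). max 1 (size r)) h)"

text \<open>Running a machine with fuel; exceeding the I/O budget S (in queries or in writes)
  makes it stop and write nothing.  Fuel S+1 always suffices since each query costs >= 1.\<close>
fun run_machine :: "nat \<Rightarrow> dds \<Rightarrow> machine \<Rightarrow> nat \<Rightarrow> hist \<Rightarrow> (nat \<times> nat) list" where
  "run_machine S D M 0 h = []"
| "run_machine S D M (Suc f) h =
     (case M h of
        Write ws \<Rightarrow> (if length ws \<le> S then ws else [])
      | Query k \<Rightarrow> (let h' = h @ [(k, D k)] in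
                    if query_cost h' > S then [] else run_machine S D M f h'))"

definition machine_output :: "nat \<Rightarrow> dds \<Rightarrow> machine \<Rightarrow> (nat \<times> nat) list" where
  "machine_output S D M = run_machine S D M (Suc S) []"

definition write_positions :: "nat \<Rightarrow> dds \<Rightarrow> round \<Rightarrow> nat \<Rightarrow> (nat \<times> nat) set" where
  "write_positions S D rd k =
     {(m, j). j < length (machine_output S D (rd m)) \<and> fst (machine_output S D (rd m) ! j) = k}"

definition next_dds :: "nat \<Rightarrow> dds \<Rightarrow> round \<Rightarrow> dds" where
  "next_dds S D rd k =
     (if finite (write_positions S D rd k)
      then image_mset (\<lambda>(m, j). snd (machine_output S D (rd m) ! j))
             (mset_set (write_positions S D rd k))
      else {#})"

fun dds_after :: "nat \<Rightarrow> dds \<Rightarrow> alg \<Rightarrow> dds" where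
  "dds_after S D [] = D"
| "dds_after S D (rd # rds) = dds_after S (next_dds S D rd) rds"

definition dds0 :: "nat \<Rightarrow> (nat \<Rightarrow> bool) \<Rightarrow> dds" where
  "dds0 n x k = (if 1 \<le> k \<and> k \<le> n choose 2 then {# of_bool (x k) #} else {#})"

definition valid_ampc :: "nat \<Rightarrow> nat \<Rightarrow> alg \<Rightarrow> bool" where
  "valid_ampc n S A \<longleftrightarrow>
     (\<forall>x i k. i < length A \<longrightarrow>
        (let D = dds_after S (dds0 n x) (take i A) in
           finite (write_positions S D (A ! i) k) \<and> card (write_positions S D (A ! i) k) \<le> S))"

definition ampc_outputs :: "nat \<Rightarrow> nat \<Rightarrow> alg \<Rightarrow> (nat \<Rightarrow> bool) \<Rightarrow> nat \<Rightarrow> bool" where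
  "ampc_outputs n S A x b \<longleftrightarrow>
     (let D = dds_after S (dds0 n x) A in
        D answer_key = {#b#} \<and> (\<forall>k. k \<noteq> answer_key \<longrightarrow> D k = {#}))"

end

theory Submission
  imports Defs
begin

definition ind :: "bool \<Rightarrow> real" where "ind b = (if b then 1 else 0)"

definition monom :: "nat set \<Rightarrow> (nat \<Rightarrow> bool) \<Rightarrow> real" where
  "monom T y = (\<Prod>i\<in>T. ind (y i))"

definition cube :: "nat \<Rightarrow> (nat \<Rightarrow> bool) set" where
  "cube m = {y. \<forall>i\<ge>m. \<not> y i}"

definition chi :: "nat \<Rightarrow> (nat \<Rightarrow> bool) \<Rightarrow> real" where
  "chi m y = (- 1) ^ card {i. i < m \<and> y i}"

inductive_set Pd :: "nat \<Rightarrow> nat \<Rightarrow> ((nat \<Rightarrow> bool) \<Rightarrow> real) set" for m d where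
  zero: "(\<lambda>y. 0) \<in> Pd m d"
| mon: "finite T \<Longrightarrow> card T \<le> d \<Longrightarrow> (\<lambda>y. c * monom T y) \<in> Pd m d"
| add: "f \<in> Pd m d \<Longrightarrow> g \<in> Pd m d \<Longrightarrow> (\<lambda>y. f y + g y) \<in> Pd m d"
| ext: "f \<in> Pd m d \<Longrightarrow> (\<And>y. y \<in> cube m \<Longrightarrow> g y = f y) \<Longrightarrow> g \<in> Pd m d"

lemma finite_cube: "finite (cube m)"
proof -
  have "cube m \<subseteq> (\<lambda>A i. i \<in> A) ` Pow {..<m}"
  proof
    fix y assume "y \<in> cube m"
    then have "y = (\<lambda>i. i \<in> {i. i < m \<and> y i})"
      unfolding cube_def fun_eq_iff by (metis mem_Collect_eq not_less)
    then show "y \<in> (\<lambda>A i. i \<in> A) ` Pow {..<m}" by blast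
  qed
  then show ?thesis by (rule finite_subset) auto
qed

lemma monom_alt: "finite T \<Longrightarrow> monom T y = ind (\<forall>i\<in>T. y i)"
  unfolding monom_def by (induction T rule: finite_induct) (auto simp: ind_def)

lemma monom_mult: "finite T \<Longrightarrow> finite T' \<Longrightarrow> monom T y * monom T' y = monom (T \<union> T') y"
  by (auto simp: monom_alt ind_def)

lemma Pd_mono: "f \<in> Pd m d \<Longrightarrow> d \<le> d' \<Longrightarrow> f \<in> Pd m d'"
proof (induction rule: Pd.induct)
  case zero show ?case by (rule Pd.zero)
next
  case (mon T c) then show ?case by (intro Pd.mon) auto
next
  case (add f g) then show ?case by (intro Pd.add) auto
next
  case (ext f g) show ?case by (rule Pd.ext[OF ext.IH[OF ext.prems]]) (simp add: ext.hyps)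
qed

lemma Pd_const: "(\<lambda>y. c) \<in> Pd m d"
  using Pd.mon[where T="{}" and c=c and m=m and d=d] by (simp add: monom_def)

lemma Pd_scale: "f \<in> Pd m d \<Longrightarrow> (\<lambda>y. c * f y) \<in> Pd m d"
proof (induction rule: Pd.induct)
  case zero then show ?case by (simp add: Pd.zero)
next
  case (mon T c') show ?case by (rule Pd.ext[OF Pd.mon[where T=T and d=d and m=m and c="c * c'"]]) (use mon in auto)
next
  case (add f g) show ?case by (rule Pd.ext[OF Pd.add[OF add.IH]]) (simp add: distrib_left)
next
  case (ext f g) show ?case by (rule Pd.ext[OF ext.IH]) (simp add: ext.hyps)
qed

lemma Pd_sum: "finite I \<Longrightarrow> (\<And>i. i \<in> I \<Longrightarrow> f i \<in> Pd m d) \<Longrightarrow> (\<lambda>y. \<Sum>i\<in>I. f i y) \<in> Pd m d"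
proof (induction I rule: finite_induct)
  case empty then show ?case by (simp add: Pd.zero)
next
  case (insert a I)
  have "(\<lambda>y. f a y + (\<Sum>i\<in>I. f i y)) \<in> Pd m d"
    by (rule Pd.add) (use insert in auto)
  then show ?case by (rule Pd.ext) (simp add: insert.hyps)
qed

lemma Pd_mult_mon:
  assumes "g \<in> Pd m d2" "finite T" "card T \<le> d1"
  shows "(\<lambda>y. c * monom T y * g y) \<in> Pd m (d1 + d2)"
  using assms(1)
proof (induction rule: Pd.induct)
  case zero then show ?case using Pd.zero[where m=m and d="d1+d2"] by simp
next
  case (mon T' c')
  have "card (T \<union> T') \<le> d1 + d2"
    using card_Un_le[of T T'] mon assms by linarith
  then have "(\<lambda>y. (c * c') * monom (T \<union> T') y) \<in> Pd m (d1 + d2)"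
    using mon assms by (intro Pd.mon) auto
  then show ?case
    by (rule Pd.ext) (simp add: monom_mult[OF assms(2) mon(1), symmetric] mult_ac)
next
  case (add f g)
  then show ?case using Pd.add[OF add.IH] by (simp add: distrib_left)
next
  case (ext f g)
  show ?case by (rule Pd.ext[OF ext.IH]) (simp add: ext.hyps)
qed

lemma Pd_mult: "f \<in> Pd m d1 \<Longrightarrow> g \<in> Pd m d2 \<Longrightarrow> (\<lambda>y. f y * g y) \<in> Pd m (d1 + d2)"
proof (induction rule: Pd.induct)
  case zero then show ?case using Pd.zero[where m=m and d="d1+d2"] by simp
next
  case (mon T c) then show ?case using Pd_mult_mon by blast
next
  case (add f f')
  then show ?case using Pd.add[OF add.IH] by (simp add: distrib_right)
next
  case (ext f f')
  show ?case by (rule Pd.ext[OF ext.IH[OF ext.prems]]) (simp add: ext.hyps)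
qed

lemma Pd_dep1:
  assumes "\<And>y y'. y j = y' j \<Longrightarrow> F y = F y'"
  shows "(\<lambda>y. ind (F y)) \<in> Pd m 1"
proof -
  define c1 where "c1 = ind (F (\<lambda>i. i = j))"
  define c0 where "c0 = ind (F (\<lambda>i. False))"
  have "(\<lambda>y. (\<lambda>y. (c1 - c0) * monom {j} y) y + (\<lambda>y. c0) y) \<in> Pd m 1"
    by (intro Pd.add Pd.mon Pd_const) auto
  moreover have "ind (F y) = (c1 - c0) * monom {j} y + c0" for y
  proof (cases "y j")
    case True
    then have "F y = F (\<lambda>i. i = j)" by (intro assms) auto
    then show ?thesis using True by (simp add: c1_def monom_def ind_def)
  next
    case False
    then have "F y = F (\<lambda>i. False)" by (intro assms) auto
    then show ?thesis using False by (simp add: c0_def monom_def ind_def)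
  qed
  ultimately show ?thesis by (metis (no_types, lifting) Pd.ext)
qed

lemma chi_flip:
  assumes "j < m"
  shows "chi m (y(j := \<not> y j)) = - chi m y"
proof -
  let ?A = "{i. i < m \<and> y i}"
  have fin: "finite ?A" by auto
  show ?thesis
  proof (cases "y j")
    case True
    then have "{i. i < m \<and> (y(j := \<not> y j)) i} = ?A - {j}" by auto
    moreover have "j \<in> ?A" using True assms by auto
    ultimately have eq: "card {i. i < m \<and> (y(j := \<not> y j)) i} = card (?A - {j})" by (simp only:)
    have "card ?A = Suc (card (?A - {j}))" using fin \<open>j \<in> ?A\<close> by (rule card.remove)
    then show ?thesis unfolding chi_def using eq by simp
  next
    case False
    then have "{i. i < m \<and> (y(j := \<not> y j)) i} = insert j ?A" using assms by auto
    moreover have "j \<notin> ?A" using False by auto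
    ultimately have "card {i. i < m \<and> (y(j := \<not> y j)) i} = Suc (card ?A)"
      using fin by simp
    then show ?thesis unfolding chi_def by simp
  qed
qed

lemma corr_mon:
  assumes "finite T" "card T < m"
  shows "(\<Sum>y\<in>cube m. chi m y * monom T y) = 0"
proof -
  obtain j where j: "j < m" "j \<notin> T"
  proof -
    have "\<not> {..<m} \<subseteq> T"
    proof
      assume "{..<m} \<subseteq> T"
      then have "card {..<m} \<le> card T" using assms(1) by (metis card_mono)
      then show False using assms by simp
    qed
    then show ?thesis using that by auto
  qed
  define fl where "fl y = y(j := \<not> y j)" for y :: "nat \<Rightarrow> bool"
  have flfl: "fl (fl y) = y" for y unfolding fl_def by auto
  have flc: "y \<in> cube m \<Longrightarrow> fl y \<in> cube m" for y using j unfolding fl_def cube_def by auto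
  have bij: "bij_betw fl (cube m) (cube m)"
    by (rule bij_betwI[of _ _ _ fl]) (auto simp: flc flfl)
  let ?f = "\<lambda>y. chi m y * monom T y"
  have "(\<Sum>y\<in>cube m. ?f (fl y)) = (\<Sum>y\<in>cube m. ?f y)"
    by (rule sum.reindex_bij_betw[OF bij])
  moreover have "?f (fl y) = - ?f y" for y
  proof -
    have "monom T (fl y) = monom T y" unfolding monom_def fl_def using j by (intro prod.cong) auto
    then show ?thesis using chi_flip[OF j(1), of y] by (simp add: fl_def)
  qed
  ultimately have "(\<Sum>y\<in>cube m. - ?f y) = (\<Sum>y\<in>cube m. ?f y)" by simp
  then show ?thesis by (simp add: sum_negf)
qed

lemma corr_Pd: "f \<in> Pd m d \<Longrightarrow> d < m \<Longrightarrow> (\<Sum>y\<in>cube m. chi m y * f y) = 0"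
proof (induction rule: Pd.induct)
  case zero then show ?case by simp
next
  case (mon T c)
  have "(\<Sum>y\<in>cube m. chi m y * (c * monom T y)) = c * (\<Sum>y\<in>cube m. chi m y * monom T y)"
    by (simp add: sum_distrib_left algebra_simps)
  then show ?case using corr_mon[of T m] mon by simp
next
  case (add f g) then show ?case by (simp add: distrib_left sum.distrib)
next
  case (ext f g)
  have "(\<Sum>y\<in>cube m. chi m y * g y) = (\<Sum>y\<in>cube m. chi m y * f y)"
    by (rule sum.cong) (auto simp: ext.hyps)
  then show ?case using ext.IH ext.prems by simp
qed

lemma Pd_ind_finite:
  assumes "\<And>v. (\<lambda>y. ind (F y = v)) \<in> Pd m e"
  shows "(\<lambda>y. ind (Q (F y))) \<in> Pd m e"
proof -
  let ?V = "F ` cube m"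
  have fin: "finite ?V" using finite_cube by simp
  have "(\<lambda>y. \<Sum>v\<in>?V. ind (Q v) * ind (F y = v)) \<in> Pd m e"
    by (rule Pd_sum[OF fin], rule Pd_scale, rule assms)
  moreover have "ind (Q (F y)) = (\<Sum>v\<in>?V. ind (Q v) * ind (F y = v))" if "y \<in> cube m" for y
  proof -
    have "(\<Sum>v\<in>?V. ind (Q v) * ind (F y = v)) = (\<Sum>v\<in>?V. if v = F y then ind (Q v) else 0)"
      by (rule sum.cong) (auto simp: ind_def)
    also have "\<dots> = ind (Q (F y))" using that by (simp add: sum.delta fin)
    finally show ?thesis by simp
  qed
  ultimately show ?thesis by (rule Pd.ext)
qed

lemma run_Pd:
  assumes "\<And>k \<mu>. (\<lambda>y. ind (D y k = \<mu>)) \<in> Pd m e"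
  shows "(\<lambda>y. ind (run_machine S (D y) M f h = ov)) \<in> Pd m (f * e)"
proof (induction f arbitrary: h ov)
  case 0
  show ?case using Pd_const[where c="ind ([] = ov)"] by simp
next
  case (Suc f)
  show ?case
  proof (cases "M h")
    case (Write ws)
    show ?thesis using Pd_const[where c="ind ((if length ws \<le> S then ws else []) = ov)"]
      by (simp add: Write)
  next
    case (Query k)
    let ?V = "(\<lambda>y. D y k) ` cube m"
    define R where "R \<mu> y = (if query_cost (h @ [(k, \<mu>)]) > S then []
        else run_machine S (D y) M f (h @ [(k, \<mu>)]))" for \<mu> y
    have fin: "finite ?V" using finite_cube by simp
    have R: "(\<lambda>y. ind (R \<mu> y = ov)) \<in> Pd m (f * e)" for \<mu>
    proof (cases "query_cost (h @ [(k, \<mu>)]) > S")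
      case True
      then show ?thesis using Pd_const[where c="ind ([] = ov)"] by (simp add: R_def)
    next
      case False
      then show ?thesis using Suc.IH[of "h @ [(k, \<mu>)]" ov] by (simp add: R_def)
    qed
    have "(\<lambda>y. \<Sum>\<mu>\<in>?V. ind (D y k = \<mu>) * ind (R \<mu> y = ov)) \<in> Pd m (e + f * e)"
      by (rule Pd_sum[OF fin], rule Pd_mult, rule assms, rule R)
    moreover have "ind (run_machine S (D y) M (Suc f) h = ov)
        = (\<Sum>\<mu>\<in>?V. ind (D y k = \<mu>) * ind (R \<mu> y = ov))" if "y \<in> cube m" for y
    proof -
      have "(\<Sum>\<mu>\<in>?V. ind (D y k = \<mu>) * ind (R \<mu> y = ov))
          = (\<Sum>\<mu>\<in>?V. if \<mu> = D y k then ind (R \<mu> y = ov) else 0)"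
        by (rule sum.cong) (auto simp: ind_def)
      also have "\<dots> = ind (R (D y k) y = ov)" using that by (simp add: sum.delta fin)
      also have "\<dots> = ind (run_machine S (D y) M (Suc f) h = ov)"
        by (simp add: Query R_def Let_def)
      finally show ?thesis by simp
    qed
    ultimately have "(\<lambda>y. ind (run_machine S (D y) M (Suc f) h = ov)) \<in> Pd m (e + f * e)" by (rule Pd.ext)
    then show ?thesis by (simp add: add.commute)
  qed
qed

lemma tuple_Pd:
  assumes "finite V" "\<And>M ov. M \<in> V \<Longrightarrow> (\<lambda>y. ind (out M y = ov)) \<in> Pd m e"
  shows "(\<lambda>y. ind (Q (\<lambda>M. if M \<in> V then out M y else []))) \<in> Pd m (card V * e)"
  using assms
proof (induction V arbitrary: Q rule: finite_induct)
  case empty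
  show ?case using Pd_const[where c="ind (Q (\<lambda>M. []))"] by simp
next
  case (insert a V)
  define Q' where "Q' v \<tau> = Q (\<tau>(a := v))" for v \<tau>
  let ?W = "out a ` cube m"
  have fin: "finite ?W" using finite_cube by simp
  have "(\<lambda>y. \<Sum>v\<in>?W. ind (out a y = v) * ind (Q' v (\<lambda>M. if M \<in> V then out M y else []))) \<in> Pd m (e + card V * e)"
    by (rule Pd_sum[OF fin], rule Pd_mult, rule insert.prems, simp, rule insert.IH, auto intro: insert.prems)
  moreover have "ind (Q (\<lambda>M. if M \<in> insert a V then out M y else [])) =
      (\<Sum>v\<in>?W. ind (out a y = v) * ind (Q' v (\<lambda>M. if M \<in> V then out M y else [])))"
    if "y \<in> cube m" for y
  proof -
    have "(\<Sum>v\<in>?W. ind (out a y = v) * ind (Q' v (\<lambda>M. if M \<in> V then out M y else [])))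
        = (\<Sum>v\<in>?W. if v = out a y then ind (Q' v (\<lambda>M. if M \<in> V then out M y else [])) else 0)"
      by (rule sum.cong) (auto simp: ind_def)
    also have "\<dots> = ind (Q' (out a y) (\<lambda>M. if M \<in> V then out M y else []))"
      using that by (simp add: sum.delta fin)
    also have "(\<lambda>M. if M \<in> V then out M y else [])(a := out a y) = (\<lambda>M. if M \<in> insert a V then out M y else [])"
      by (auto simp: fun_eq_iff)
    then have "ind (Q' (out a y) (\<lambda>M. if M \<in> V then out M y else [])) = ind (Q (\<lambda>M. if M \<in> insert a V then out M y else []))"
      by (simp add: Q'_def)
    finally show ?thesis by simp
  qed
  ultimately have "(\<lambda>y. ind (Q (\<lambda>M. if M \<in> insert a V then out M y else []))) \<in> Pd m (e + card V * e)"
    by (rule Pd.ext) 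
  then show ?case using insert.hyps by simp
qed

lemma alt_sum_Pow:
  assumes "finite B"
  shows "(\<Sum>T\<in>Pow B. (- 1 :: real) ^ card T) = (if B = {} then 1 else 0)"
  using assms
proof (induction B rule: finite_induct)
  case empty then show ?case by simp
next
  case (insert b B)
  have inj: "inj_on (insert b) (Pow B)"
  proof (rule inj_onI)
    fix T T' assume "T \<in> Pow B" "T' \<in> Pow B" "insert b T = insert b T'"
    moreover have "b \<notin> T" "b \<notin> T'" using calculation insert.hyps by auto
    ultimately show "T = T'" by (metis Diff_insert_absorb)
  qed
  have neg: "(\<Sum>T\<in>Pow B. (- 1 :: real) ^ card (insert b T)) = (\<Sum>T\<in>Pow B. - ((- 1 :: real) ^ card T))"
  proof (rule sum.cong)
    fix T assume "T \<in> Pow B"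
    then have "finite T" "b \<notin> T" using insert.hyps finite_subset by auto
    then show "(- 1 :: real) ^ card (insert b T) = - ((- 1) ^ card T)" by simp
  qed simp
  have "(\<Sum>T\<in>Pow (insert b B). (- 1 :: real) ^ card T)
      = (\<Sum>T\<in>Pow B \<union> insert b ` Pow B. (- 1 :: real) ^ card T)"
    by (simp only: Pow_insert)
  also have "\<dots> = (\<Sum>T\<in>Pow B. (- 1 :: real) ^ card T) + (\<Sum>T\<in>insert b ` Pow B. (- 1 :: real) ^ card T)"
    by (rule sum.union_disjoint) (use insert.hyps in auto)
  also have "(\<Sum>T\<in>insert b ` Pow B. (- 1 :: real) ^ card T) = (\<Sum>T\<in>Pow B. (- 1 :: real) ^ card (insert b T))"
    by (subst sum.reindex[OF inj]) simp
  also have "\<dots> = - (\<Sum>T\<in>Pow B. (- 1 :: real) ^ card T)" using neg by (simp add: sum_negf)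
  finally show ?case by simp
qed

lemma moebius:
  assumes "finite U" "W \<subseteq> X" "X \<subseteq> U"
  shows "(\<Sum>Z\<in>{Z. W \<subseteq> Z \<and> Z \<subseteq> U}. (- 1 :: real) ^ card (Z - W) * ind (Z \<subseteq> X)) = ind (X = W)"
proof -
  have finX: "finite X" using assms finite_subset by blast
  have fin: "finite {Z. W \<subseteq> Z \<and> Z \<subseteq> U}" by (rule finite_subset[where B="Pow U"]) (use assms in auto)
  have "(\<Sum>Z\<in>{Z. W \<subseteq> Z \<and> Z \<subseteq> U}. (- 1 :: real) ^ card (Z - W) * ind (Z \<subseteq> X))
      = (\<Sum>Z\<in>{Z \<in> {Z. W \<subseteq> Z \<and> Z \<subseteq> U}. Z \<subseteq> X}. (- 1 :: real) ^ card (Z - W))"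
    using fin by (simp add: sum.inter_filter[symmetric] ind_def if_distrib cong: if_cong)
  also have "{Z \<in> {Z. W \<subseteq> Z \<and> Z \<subseteq> U}. Z \<subseteq> X} = (\<lambda>T. W \<union> T) ` Pow (X - W)"
  proof
    show "{Z \<in> {Z. W \<subseteq> Z \<and> Z \<subseteq> U}. Z \<subseteq> X} \<subseteq> (\<lambda>T. W \<union> T) ` Pow (X - W)"
    proof
      fix Z assume "Z \<in> {Z \<in> {Z. W \<subseteq> Z \<and> Z \<subseteq> U}. Z \<subseteq> X}"
      then have "Z = W \<union> (Z - W)" "Z - W \<in> Pow (X - W)" by auto
      then show "Z \<in> (\<lambda>T. W \<union> T) ` Pow (X - W)" by blast
    qed
  next
    show "(\<lambda>T. W \<union> T) ` Pow (X - W) \<subseteq> {Z \<in> {Z. W \<subseteq> Z \<and> Z \<subseteq> U}. Z \<subseteq> X}"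
      using assms by auto
  qed
  also have "(\<Sum>Z\<in>(\<lambda>T. W \<union> T) ` Pow (X - W). (- 1 :: real) ^ card (Z - W))
      = (\<Sum>T\<in>Pow (X - W). (- 1 :: real) ^ card ((W \<union> T) - W))"
  proof -
    have inj: "inj_on (\<lambda>T. W \<union> T) (Pow (X - W))" by (rule inj_onI) blast
    show ?thesis by (simp add: sum.reindex[OF inj] o_def)
  qed
  also have "\<dots> = (\<Sum>T\<in>Pow (X - W). (- 1 :: real) ^ card T)"
  proof (rule sum.cong)
    fix T assume "T \<in> Pow (X - W)"
    then have "W \<union> T - W = T" by auto
    then show "(- 1 :: real) ^ card (W \<union> T - W) = (- 1) ^ card T" by simp
  qed simp
  also have "\<dots> = (if X - W = {} then 1 else 0)" using finX by (intro alt_sum_Pow) auto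
  also have "\<dots> = ind (X = W)" using assms by (auto simp: ind_def)
  finally show ?thesis .
qed

lemma moebius2:
  assumes "finite U" "X \<subseteq> U"
  shows "(\<Sum>Z\<in>{Z. W \<subseteq> Z \<and> Z \<subseteq> U}. (- 1 :: real) ^ card (Z - W) * ind (Z \<subseteq> X)) = ind (X = W)"
proof (cases "W \<subseteq> X")
  case True
  then show ?thesis using moebius[OF assms(1) True assms(2)] by simp
next
  case False
  then have "(\<Sum>Z\<in>{Z. W \<subseteq> Z \<and> Z \<subseteq> U}. (- 1 :: real) ^ card (Z - W) * ind (Z \<subseteq> X)) = 0"
    by (intro sum.neutral) (auto simp: ind_def)
  then show ?thesis using False by (auto simp: ind_def)
qed

lemma next_Pd:
  fixes D :: "(nat \<Rightarrow> bool) \<Rightarrow> dds" and rd :: round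
  assumes fin: "\<And>y. y \<in> cube m \<Longrightarrow> finite (write_positions S (D y) rd k) \<and> card (write_positions S (D y) rd k) \<le> S"
    and outP: "\<And>M ov. (\<lambda>y. ind (machine_output S (D y) (rd M) = ov)) \<in> Pd m e"
  shows "(\<lambda>y. ind (next_dds S (D y) rd k = \<mu>)) \<in> Pd m (S * e)"
proof -
  define out where "out M y = machine_output S (D y) (rd M)" for M y
  define wr where "wr ov \<longleftrightarrow> (\<exists>j<length ov. fst (ov ! j) = k)" for ov :: "(nat \<times> nat) list"
  define Wr where "Wr y = {M. wr (out M y)}" for y
  define Psi where "Psi W \<tau> = image_mset (\<lambda>(M, j). snd (\<tau> M ! j))
      (mset_set {(M, j). M \<in> W \<and> j < length (\<tau> M) \<and> fst (\<tau> M ! j) = k})"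
    for W :: "nat set" and \<tau> :: "nat \<Rightarrow> (nat \<times> nat) list"
  define tau where "tau W y = (\<lambda>M. if M \<in> W then out M y else [])" for W y
  have WP: "write_positions S (D y) rd k = {(M, j). M \<in> Wr y \<and> j < length (out M y) \<and> fst (out M y ! j) = k}" for y
    unfolding write_positions_def out_def Wr_def wr_def by auto
  have Wr_img: "Wr y = fst ` write_positions S (D y) rd k" for y
  proof (rule set_eqI)
    fix M
    show "M \<in> Wr y \<longleftrightarrow> M \<in> fst ` write_positions S (D y) rd k"
    proof
      assume "M \<in> Wr y"
      then obtain j where j: "j < length (out M y)" "fst (out M y ! j) = k"
        unfolding Wr_def wr_def by auto
      then have "(M, j) \<in> write_positions S (D y) rd k" unfolding WP using \<open>M \<in> Wr y\<close> by simp
      then show "M \<in> fst ` write_positions S (D y) rd k" by (rule rev_image_eqI) simp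
    next
      assume "M \<in> fst ` write_positions S (D y) rd k"
      then show "M \<in> Wr y" unfolding WP by auto
    qed
  qed
  have finWr: "finite (Wr y)" and cardWr: "card (Wr y) \<le> S" if "y \<in> cube m" for y
  proof -
    show "finite (Wr y)" using fin[OF that] Wr_img by simp
    show "card (Wr y) \<le> S" using fin[OF that] Wr_img card_image_le[of "write_positions S (D y) rd k" fst]
      by simp
  qed
  have nd: "next_dds S (D y) rd k = Psi (Wr y) (tau (Wr y) y)" if "y \<in> cube m" for y
  proof -
    have f: "finite (write_positions S (D y) rd k)" using fin[OF that] by simp
    have set_eq: "{(M, j). M \<in> Wr y \<and> j < length (tau (Wr y) y M) \<and> fst (tau (Wr y) y M ! j) = k}
        = write_positions S (D y) rd k"
      unfolding WP tau_def by auto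
    have "next_dds S (D y) rd k = image_mset (\<lambda>(m, j). snd (out m y ! j)) (mset_set (write_positions S (D y) rd k))"
      unfolding next_dds_def out_def using f by simp
    also have "\<dots> = image_mset (\<lambda>(M, j). snd (tau (Wr y) y M ! j)) (mset_set (write_positions S (D y) rd k))"
    proof (rule image_mset_cong)
      fix x assume "x \<in># mset_set (write_positions S (D y) rd k)"
      then have "x \<in> write_positions S (D y) rd k" using f by simp
      then show "(\<lambda>(m, j). snd (out m y ! j)) x = (\<lambda>(M, j). snd (tau (Wr y) y M ! j)) x"
        unfolding WP tau_def by auto
    qed
    also have "\<dots> = Psi (Wr y) (tau (Wr y) y)" unfolding Psi_def set_eq ..
    finally show ?thesis .
  qed
  define U where "U = (\<Union>y\<in>cube m. Wr y)"
  have finU: "finite U" unfolding U_def using finite_cube finWr by auto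
  have WrU: "y \<in> cube m \<Longrightarrow> Wr y \<subseteq> U" for y unfolding U_def by auto
  define T where "T W Z y = ind (Z \<subseteq> Wr y \<and> Psi W (tau W y) = \<mu>)" for W Z y
  have TP: "T W Z \<in> Pd m (S * e)" if "W \<subseteq> Z" "Z \<subseteq> U" for W Z
  proof (cases "card Z \<le> S")
    case True
    have finZ: "finite Z" using finU that finite_subset by blast
    define Q where "Q \<tau> \<longleftrightarrow> (\<forall>M\<in>Z. wr (\<tau> M)) \<and> Psi W (\<lambda>M. if M \<in> W then \<tau> M else []) = \<mu>" for \<tau>
    have "(\<lambda>y. ind (Q (\<lambda>M. if M \<in> Z then out M y else []))) \<in> Pd m (card Z * e)"
      by (rule tuple_Pd[OF finZ]) (simp add: out_def outP)
    moreover have "T W Z y = ind (Q (\<lambda>M. if M \<in> Z then out M y else []))" for y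
    proof -
      have "(\<lambda>M. if M \<in> W then (if M \<in> Z then out M y else []) else []) = tau W y"
        using that unfolding tau_def by (auto simp: fun_eq_iff)
      moreover have "(Z \<subseteq> Wr y) = (\<forall>M\<in>Z. wr (if M \<in> Z then out M y else []))"
        unfolding Wr_def by auto
      ultimately show ?thesis unfolding T_def Q_def by simp
    qed
    ultimately have "T W Z \<in> Pd m (card Z * e)" by (metis (no_types, lifting) ext)
    then show ?thesis by (rule Pd_mono) (use True in simp)
  next
    case False
    have "T W Z y = 0" if "y \<in> cube m" for y
    proof -
      have "\<not> Z \<subseteq> Wr y"
      proof
        assume "Z \<subseteq> Wr y"
        then have "card Z \<le> card (Wr y)" using finWr[OF that] by (simp add: card_mono)
        then show False using cardWr[OF that] False by simp
      qed
      then show ?thesis unfolding T_def ind_def by simp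
    qed
    then show ?thesis by (intro Pd.ext[OF Pd.zero])
  qed
  let ?G = "\<lambda>y. \<Sum>W\<in>Pow U. \<Sum>Z\<in>{Z. W \<subseteq> Z \<and> Z \<subseteq> U}. (- 1 :: real) ^ card (Z - W) * T W Z y"
  have "?G \<in> Pd m (S * e)"
  proof (rule Pd_sum)
    show "finite (Pow U)" using finU by simp
  next
    fix W assume W: "W \<in> Pow U"
    show "(\<lambda>y. \<Sum>Z\<in>{Z. W \<subseteq> Z \<and> Z \<subseteq> U}. (- 1 :: real) ^ card (Z - W) * T W Z y) \<in> Pd m (S * e)"
    proof (rule Pd_sum)
      show "finite {Z. W \<subseteq> Z \<and> Z \<subseteq> U}" by (rule finite_subset[where B="Pow U"]) (use finU in auto)
    next
      fix Z assume "Z \<in> {Z. W \<subseteq> Z \<and> Z \<subseteq> U}"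
      then show "(\<lambda>y. (- 1 :: real) ^ card (Z - W) * T W Z y) \<in> Pd m (S * e)"
        by (intro Pd_scale TP) auto
    qed
  qed
  moreover have "ind (next_dds S (D y) rd k = \<mu>) = ?G y" if y: "y \<in> cube m" for y
  proof -
    have "?G y = (\<Sum>W\<in>Pow U. ind (Psi W (tau W y) = \<mu>) *
        (\<Sum>Z\<in>{Z. W \<subseteq> Z \<and> Z \<subseteq> U}. (- 1 :: real) ^ card (Z - W) * ind (Z \<subseteq> Wr y)))"
      unfolding T_def by (intro sum.cong refl) (simp add: sum_distrib_left ind_def)
    also have "\<dots> = (\<Sum>W\<in>Pow U. ind (Psi W (tau W y) = \<mu>) * ind (Wr y = W))"
      by (intro sum.cong refl) (simp add: moebius2[OF finU WrU[OF y]])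
    also have "\<dots> = (\<Sum>W\<in>Pow U. if W = Wr y then ind (Psi W (tau W y) = \<mu>) else 0)"
      by (intro sum.cong refl) (auto simp: ind_def)
    also have "\<dots> = ind (Psi (Wr y) (tau (Wr y) y) = \<mu>)"
      using WrU[OF y] finU by (simp add: sum.delta)
    also have "\<dots> = ind (next_dds S (D y) rd k = \<mu>)" using nd[OF y] by simp
    finally show ?thesis by simp
  qed
  ultimately show ?thesis by (rule Pd.ext)
qed

lemma dds_after_snoc: "dds_after S D (xs @ [a]) = next_dds S (dds_after S D xs) a"
  by (induction xs arbitrary: D) auto

lemma alg_Pd:
  assumes valid: "valid_ampc n S A"
    and gdep: "\<And>k. \<exists>j. \<forall>y y'. y j = y' j \<longrightarrow> g y k = g y' k"
  shows "r \<le> length A \<Longrightarrow> (\<lambda>y. ind (dds_after S (dds0 n (g y)) (take r A) k = \<mu>)) \<in> Pd m ((S * (S + 1)) ^ r)"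
proof (induction r arbitrary: k \<mu>)
  case 0
  obtain j where j: "\<And>y y'. y j = y' j \<Longrightarrow> g y k = g y' k" using gdep[of k] by blast
  have "(\<lambda>y. ind (dds0 n (g y) k = \<mu>)) \<in> Pd m 1"
  proof (rule Pd_dep1[where j=j])
    fix y y' :: "nat \<Rightarrow> bool" assume "y j = y' j"
    then have "g y k = g y' k" by (rule j)
    then show "(dds0 n (g y) k = \<mu>) = (dds0 n (g y') k = \<mu>)" by (simp add: dds0_def)
  qed
  then show ?case by simp
next
  case (Suc r)
  then have r: "r < length A" by simp
  define Dr where "Dr y = dds_after S (dds0 n (g y)) (take r A)" for y
  have IH: "(\<lambda>y. ind (Dr y k = \<mu>)) \<in> Pd m ((S * (S + 1)) ^ r)" for k \<mu>
    unfolding Dr_def using Suc by simp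
  have outP: "(\<lambda>y. ind (machine_output S (Dr y) ((A ! r) M) = ov)) \<in> Pd m (Suc S * (S * (S + 1)) ^ r)" for M ov
    unfolding machine_output_def by (rule run_Pd[OF IH])
  have fin: "finite (write_positions S (Dr y) (A ! r) k) \<and> card (write_positions S (Dr y) (A ! r) k) \<le> S" for y k
  proof -
    have v: "\<forall>x i k. i < length A \<longrightarrow> finite (write_positions S (dds_after S (dds0 n x) (take i A)) (A ! i) k)
       \<and> card (write_positions S (dds_after S (dds0 n x) (take i A)) (A ! i) k) \<le> S"
      using valid unfolding valid_ampc_def Let_def .
    show ?thesis unfolding Dr_def using v r by simp
  qed
  have "(\<lambda>y. ind (next_dds S (Dr y) (A ! r) k = \<mu>)) \<in> Pd m (S * (Suc S * (S * (S + 1)) ^ r))"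
    by (rule next_Pd[OF fin outP])
  moreover have "take (Suc r) A = take r A @ [A ! r]" using r by (simp add: take_Suc_conv_app_nth)
  moreover have "S * (Suc S * (S * (S + 1)) ^ r) = (S * (S + 1)) ^ Suc r" by (simp add: algebra_simps)
  ultimately show ?case unfolding Dr_def by (simp add: dds_after_snoc)
qed

definition vtx :: "nat \<Rightarrow> nat \<Rightarrow> bool \<Rightarrow> nat" where
  "vtx L p t = (if t then L + p + 1 else p + 1)"

definition par :: "(nat \<Rightarrow> bool) \<Rightarrow> nat \<Rightarrow> bool" where
  "par y p = odd (card {q. q < p \<and> y q})"

definition edg :: "nat \<Rightarrow> nat \<Rightarrow> bool \<Rightarrow> bool \<Rightarrow> nat set" where
  "edg L p t c = {vtx L p t, vtx L (Suc p mod L) (t \<noteq> c)}"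

definition Eset :: "nat \<Rightarrow> (nat \<Rightarrow> bool) \<Rightarrow> nat set set" where
  "Eset L y = {edg L p t (y p) | p t. p < L}"

definition Fv :: "nat \<Rightarrow> (nat \<Rightarrow> bool) \<Rightarrow> nat \<Rightarrow> nat" where
  "Fv L y j = vtx L (j mod L) (par y (j mod L) \<noteq> (L \<le> j))"

definition hl :: "nat \<Rightarrow> (nat \<Rightarrow> bool) \<Rightarrow> bool \<Rightarrow> nat list" where
  "hl L y b = map (\<lambda>p. vtx L p (par y p \<noteq> b)) [0..<L]"

lemma par_0[simp]: "\<not> par y 0"
  by (simp add: par_def)

lemma par_Suc: "par y (Suc p) = (par y p \<noteq> y p)"
proof -
  have fin: "finite {q. q < p \<and> y q}" by simp
  show ?thesis
  proof (cases "y p")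
    case True
    then have "{q. q < Suc p \<and> y q} = insert p {q. q < p \<and> y q}" by auto
    then show ?thesis using True fin by (simp add: par_def)
  next
    case False
    then have "{q. q < Suc p \<and> y q} = {q. q < p \<and> y q}" using less_Suc_eq by auto
    then show ?thesis using False by (simp add: par_def)
  qed
qed

lemma sucmod: "p < L \<Longrightarrow> Suc p mod L = (if Suc p = L then 0 else Suc p)"
  by auto

lemma vtx_inj: "p < L \<Longrightarrow> p' < L \<Longrightarrow> vtx L p t = vtx L p' t' \<Longrightarrow> p = p' \<and> t = t'"
  unfolding vtx_def by (auto split: if_splits)

lemma vtx_range: "p < L \<Longrightarrow> vtx L p t \<in> {1..2 * L}"
  unfolding vtx_def by auto

lemma col_vtx: "p < L \<Longrightarrow> (vtx L p t - 1) mod L = p"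
  unfolding vtx_def by auto

lemma cycle_edges_map:
  "cycle_edges (map f [0..<N]) = {{f i, f (Suc i mod N)} | i. i < N}"
proof (intro equalityI subsetI)
  fix e assume "e \<in> cycle_edges (map f [0..<N])"
  then obtain i where i: "i < length (map f [0..<N])"
    "e = {map f [0..<N] ! i, map f [0..<N] ! ((i + 1) mod length (map f [0..<N]))}"
    unfolding cycle_edges_def by blast
  then have iN: "i < N" by simp
  then have "(i + 1) mod N < N" by simp
  then have "e = {f i, f (Suc i mod N)}" using i iN by simp
  then show "e \<in> {{f i, f (Suc i mod N)} | i. i < N}" using iN by blast
next
  fix e assume "e \<in> {{f i, f (Suc i mod N)} | i. i < N}"
  then obtain i where i: "i < N" "e = {f i, f (Suc i mod N)}" by blast
  moreover have "Suc i mod N < N" using i by simp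
  ultimately have "e = {map f [0..<N] ! i, map f [0..<N] ! ((i + 1) mod length (map f [0..<N]))}"
    "i < length (map f [0..<N])"
    by simp_all
  then show "e \<in> cycle_edges (map f [0..<N])" unfolding cycle_edges_def by blast
qed

lemma hl_append: "hl L y False @ hl L y True = map (Fv L y) [0..<2 * L]"
proof (rule nth_equalityI)
  show "length (hl L y False @ hl L y True) = length (map (Fv L y) [0..<2 * L])"
    by (simp add: hl_def)
next
  fix j assume "j < length (hl L y False @ hl L y True)"
  then have j: "j < 2 * L" by (simp add: hl_def)
  show "(hl L y False @ hl L y True) ! j = map (Fv L y) [0..<2 * L] ! j"
  proof (cases "j < L")
    case True
    then show ?thesis using j by (simp add: hl_def nth_append Fv_def)
  next
    case False
    then have "j mod L = j - L" using j by (simp add: mod_if)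
    moreover have "j - L < L" using j False by simp
    ultimately show ?thesis using j False by (simp add: hl_def nth_append Fv_def)
  qed
qed

lemma Fv_inj: "inj_on (Fv L y) {0..<2 * L}"
proof (rule inj_onI)
  fix j j' assume j: "j \<in> {0..<2 * L}" "j' \<in> {0..<2 * L}" "Fv L y j = Fv L y j'"
  have L: "L > 0" using j by auto
  then have "j mod L < L" "j' mod L < L" by auto
  from vtx_inj[OF this] j(3) have e: "j mod L = j' mod L"
    and t: "(par y (j mod L) \<noteq> (L \<le> j)) = (par y (j' mod L) \<noteq> (L \<le> j'))"
    unfolding Fv_def by blast+
  from t have "(L \<le> j) = (L \<le> j')" unfolding e by auto
  note leq = this
  show "j = j'"
  proof (cases "L \<le> j")
    case True
    then have T': "L \<le> j'" using leq by simp
    have "j mod L = j - L" using True j by (simp add: mod_if)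
    moreover have "j' mod L = j' - L" using T' j by (simp add: mod_if)
    ultimately show ?thesis using e True T' by arith
  next
    case False
    then have T': "\<not> L \<le> j'" using leq by simp
    have "j mod L = j" using False by simp
    moreover have "j' mod L = j'" using T' by simp
    ultimately show ?thesis using e by arith
  qed
qed

lemma Fv_set: "Fv L y ` {0..<2 * L} = {1..2 * L}"
proof (rule card_subset_eq)
  show "finite {1..2 * L}" by simp
  show "Fv L y ` {0..<2 * L} \<subseteq> {1..2 * L}"
  proof
    fix v assume "v \<in> Fv L y ` {0..<2 * L}"
    then obtain j where j: "j < 2 * L" "v = Fv L y j" by auto
    then have "L > 0" by auto
    then show "v \<in> {1..2 * L}" using j vtx_range[of "j mod L" L] unfolding Fv_def by auto
  qed
  show "card (Fv L y ` {0..<2 * L}) = card {1..2 * L}"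
    using card_image[OF Fv_inj] by simp
qed

lemma hl_distinct: "distinct (hl L y False @ hl L y True)"
  unfolding hl_append distinct_map using Fv_inj by simp

lemma hl_set: "set (hl L y False @ hl L y True) = {1..2 * L}"
  unfolding hl_append using Fv_set by simp

lemma par_sucmod: "i < L \<Longrightarrow> par y (Suc i mod L) = (par y (Suc i) \<noteq> (Suc i = L \<and> par y L))"
  by (auto simp: sucmod)

lemma cyc_even:
  assumes "\<not> par y L"
  shows "cycle_edges (hl L y b) = {edg L p (par y p \<noteq> b) (y p) | p. p < L}"
proof -
  have "{vtx L i (par y i \<noteq> b), vtx L (Suc i mod L) (par y (Suc i mod L) \<noteq> b)} = edg L i (par y i \<noteq> b) (y i)"
    if "i < L" for i
    using par_sucmod[OF that, of y] assms unfolding edg_def by (auto simp: par_Suc)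
  then show ?thesis unfolding hl_def cycle_edges_map by auto
qed

lemma cyc_odd:
  assumes "par y L"
  shows "cycle_edges (hl L y False @ hl L y True) = {edg L (j mod L) (par y (j mod L) \<noteq> (L \<le> j)) (y (j mod L)) | j. j < 2 * L}"
proof -
  have "{Fv L y j, Fv L y (Suc j mod (2 * L))} = edg L (j mod L) (par y (j mod L) \<noteq> (L \<le> j)) (y (j mod L))"
    if j: "j < 2 * L" for j
  proof -
    have "Suc j mod (2 * L) mod L = Suc (j mod L) mod L \<and>
      (par y (Suc j mod (2 * L) mod L) \<noteq> (L \<le> Suc j mod (2 * L))) = ((par y (j mod L) \<noteq> (L \<le> j)) \<noteq> y (j mod L))"
    proof (cases "j < L")
      case True
      show ?thesis
      proof (cases "Suc j = L")
        case T2: True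
        then have p: "par y (Suc j)" using assms by simp
        have a1: "Suc j mod (2 * L) = Suc j" using T2 by simp
        have a2: "Suc j mod L = 0" "j mod L = j" using T2 by auto
        have p2: "par y j \<noteq> y j" using p par_Suc[of y j] by blast
        show ?thesis unfolding a1 a2 using p2 T2 by simp
      next
        case F2: False
        have a1: "Suc j mod (2 * L) = Suc j" using True j by simp
        have a2: "Suc j mod L = Suc j" "j mod L = j" using True F2 by auto
        show ?thesis unfolding a1 a2 using True F2 by (simp add: par_Suc)
      qed
    next
      case False
      then have jm: "j mod L = j - L" using j by (simp add: mod_if)
      show ?thesis
      proof (cases "Suc j = 2 * L")
        case True
        then have "j - L = L - 1" by simp
        then have "Suc (j - L) = L" using False j by arith
        then have p: "par y (Suc (j - L)) = True" using assms by simp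
        have a1: "Suc j mod (2 * L) = 0" using True by simp
        have a2: "Suc (j - L) mod L = 0" using \<open>Suc (j - L) = L\<close> by simp
        have L0: "\<not> L \<le> 0" using j by simp
        show ?thesis unfolding a1 jm a2 using p L0 False by (simp add: par_Suc)
      next
        case F2: False
        then have "Suc j mod (2 * L) = Suc j" using j by simp
        moreover have "Suc j mod L = Suc (j - L)" using j F2 False by (simp add: mod_if, arith)
        moreover have "Suc (j - L) < L" using j F2 False by simp
        moreover have "Suc (j - L) mod L = Suc (j - L)" using \<open>Suc (j - L) < L\<close> by simp
        ultimately show ?thesis unfolding jm using False by (simp add: par_Suc)
      qed
    qed
    then have c1: "Suc j mod (2 * L) mod L = Suc (j mod L) mod L"
      and c2: "(par y (Suc j mod (2 * L) mod L) \<noteq> (L \<le> Suc j mod (2 * L))) = ((par y (j mod L) \<noteq> (L \<le> j)) \<noteq> y (j mod L))"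
      by blast+
    have "Fv L y (Suc j mod (2 * L)) = vtx L (Suc (j mod L) mod L) ((par y (j mod L) \<noteq> (L \<le> j)) \<noteq> y (j mod L))"
    proof -
      have c3: "(par y (Suc (j mod L) mod L) \<noteq> (L \<le> Suc j mod (2 * L))) = ((par y (j mod L) \<noteq> (L \<le> j)) \<noteq> y (j mod L))"
        using c2 unfolding c1 .
      show ?thesis unfolding Fv_def c1 c3 by (rule refl)
    qed
    then show ?thesis unfolding edg_def by (simp add: Fv_def)
  qed
  then show ?thesis unfolding hl_append cycle_edges_map by auto
qed

lemma Eset_odd: "par y L \<Longrightarrow> cycle_edges (hl L y False @ hl L y True) = Eset L y"
proof -
  assume a: "par y L"
  have "{edg L (j mod L) (par y (j mod L) \<noteq> (L \<le> j)) (y (j mod L)) | j. j < 2 * L} = Eset L y"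
  proof
    show "{edg L (j mod L) (par y (j mod L) \<noteq> (L \<le> j)) (y (j mod L)) | j. j < 2 * L} \<subseteq> Eset L y"
    proof
      fix e assume "e \<in> {edg L (j mod L) (par y (j mod L) \<noteq> (L \<le> j)) (y (j mod L)) | j. j < 2 * L}"
      then obtain j where "j < 2 * L" "e = edg L (j mod L) (par y (j mod L) \<noteq> (L \<le> j)) (y (j mod L))" by auto
      moreover then have "j mod L < L" by simp
      ultimately show "e \<in> Eset L y" unfolding Eset_def by blast
    qed
  next
    show "Eset L y \<subseteq> {edg L (j mod L) (par y (j mod L) \<noteq> (L \<le> j)) (y (j mod L)) | j. j < 2 * L}"
    proof
      fix e assume "e \<in> Eset L y"
      then obtain p t where pt: "p < L" "e = edg L p t (y p)" unfolding Eset_def by auto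
      show "e \<in> {edg L (j mod L) (par y (j mod L) \<noteq> (L \<le> j)) (y (j mod L)) | j. j < 2 * L}"
      proof (cases "t = par y p")
        case True
        then show ?thesis using pt by (intro CollectI exI[of _ p]) auto
      next
        case False
        have "(p + L) mod L = p" using pt by simp
        then show ?thesis using pt False by (intro CollectI exI[of _ "p + L"]) auto
      qed
    qed
  qed
  then show ?thesis using cyc_odd[OF a] by simp
qed

lemma Eset_even: "\<not> par y L \<Longrightarrow> cycle_edges (hl L y False) \<union> cycle_edges (hl L y True) = Eset L y"
proof -
  assume a: "\<not> par y L"
  show ?thesis unfolding cyc_even[OF a] Eset_def
  proof (intro equalityI subsetI)
    fix e assume "e \<in> {edg L p (par y p \<noteq> False) (y p) | p. p < L} \<union> {edg L p (par y p \<noteq> True) (y p) | p. p < L}"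
    then show "e \<in> {edg L p t (y p) | p t. p < L}" by blast
  next
    fix e assume "e \<in> {edg L p t (y p) | p t. p < L}"
    then obtain p t where "p < L" "e = edg L p t (y p)" by auto
    then show "e \<in> {edg L p (par y p \<noteq> False) (y p) | p. p < L} \<union> {edg L p (par y p \<noteq> True) (y p) | p. p < L}"
      by (cases "t = par y p") auto
  qed
qed

lemma edg_cols: "p < L \<Longrightarrow> (\<lambda>v. (v - 1) mod L) ` edg L p t c = {p, Suc p mod L}"
proof -
  assume p: "p < L"
  then have "Suc p mod L < L" by simp
  then show ?thesis unfolding edg_def using col_vtx[OF p] col_vtx[of "Suc p mod L" L] by simp
qed

lemma edg_unique:
  assumes "3 \<le> L" "p < L" "p' < L" "edg L p t c = edg L p' t' c'"
  shows "p = p'"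
proof -
  have "{p, Suc p mod L} = {p', Suc p' mod L}"
    using edg_cols[OF assms(2), of t c] edg_cols[OF assms(3), of t' c'] assms(4) by simp
  then have "p = p' \<or> (p = Suc p' mod L \<and> Suc p mod L = p')" by (simp add: doubleton_eq_iff) blast
  moreover have "\<not> (p = Suc p' mod L \<and> Suc p mod L = p')"
  proof
    assume a: "p = Suc p' mod L \<and> Suc p mod L = p'"
    have pa: "p = Suc p' mod L" and pb: "Suc p mod L = p'" using a by blast+
    show False
    proof (cases "Suc p = L")
      case True
      then have "p' = 0" using pb by simp
      then have "p = Suc 0 mod L" using pa by simp
      then have "p = 1" using assms(1) by simp
      then show False using True assms(1) by simp
    next
      case False
      then have "Suc p < L" using assms(2) by simp
      then have p': "p' = Suc p" using pb by simp
      show False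
      proof (cases "Suc p' = L")
        case True
        then have "p = 0" using pa by simp
        then show False using True p' assms(1) by simp
      next
        case False
        then have "Suc p' < L" using assms(3) by simp
        then have "p = Suc p'" using pa by simp
        then show False using p' by simp
      qed
    qed
  qed
  ultimately show ?thesis by blast
qed

lemma gdep:
  assumes "3 \<le> L"
  shows "\<exists>j. \<forall>y y'. y j = y' j \<longrightarrow> (e \<in> Eset L y) = (e \<in> Eset L y')"
proof (cases "\<exists>p t c. p < L \<and> e = edg L p t c")
  case True
  then obtain p t0 c0 where p: "p < L" "e = edg L p t0 c0" by blast
  have char: "(e \<in> Eset L y) = (\<exists>t. e = edg L p t (y p))" for y
  proof
    assume "e \<in> Eset L y"
    then obtain p' t where p': "p' < L" "e = edg L p' t (y p')" unfolding Eset_def by blast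
    then have "p' = p" using edg_unique[OF assms p'(1) p(1), of t "y p'" t0 c0] p(2) by simp
    then show "\<exists>t. e = edg L p t (y p)" using p' by blast
  next
    assume "\<exists>t. e = edg L p t (y p)"
    then show "e \<in> Eset L y" unfolding Eset_def using p(1) by blast
  qed
  show ?thesis by (rule exI[of _ p]) (simp add: char)
next
  case False
  then have "e \<notin> Eset L y" for y unfolding Eset_def by blast
  then show ?thesis by blast
qed

lemma Eset_pairs:
  assumes "2 \<le> L"
  shows "Eset L y \<subseteq> {{u, v} | u v. u \<in> {1..2 * L} \<and> v \<in> {1..2 * L} \<and> u \<noteq> v}"
proof
  fix e assume "e \<in> Eset L y"
  then obtain p t where p: "p < L" "e = edg L p t (y p)" unfolding Eset_def by blast
  have sp: "Suc p mod L < L" using p by simp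
  have ne: "Suc p mod L \<noteq> p" using p assms by (simp add: sucmod)
  have "vtx L p t \<noteq> vtx L (Suc p mod L) (t \<noteq> y p)"
    using vtx_inj[OF p(1) sp] ne by metis
  moreover have "vtx L p t \<in> {1..2 * L}" "vtx L (Suc p mod L) (t \<noteq> y p) \<in> {1..2 * L}"
    using vtx_range p(1) sp by auto
  ultimately show "e \<in> {{u, v} | u v. u \<in> {1..2 * L} \<and> v \<in> {1..2 * L} \<and> u \<noteq> v}"
    unfolding p(2) edg_def by blast
qed

lemma edges_eq:
  assumes bij: "bij_betw pair_of {1..n choose 2} {{u, v} | u v. u \<in> {1..n} \<and> v \<in> {1..n} \<and> u \<noteq> v}"
    and n: "n = 2 * L" and L: "2 \<le> L"
  shows "edges_of n pair_of (\<lambda>i. pair_of i \<in> Eset L y) = Eset L y"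
proof (intro equalityI subsetI)
  fix e assume "e \<in> edges_of n pair_of (\<lambda>i. pair_of i \<in> Eset L y)"
  then show "e \<in> Eset L y" unfolding edges_of_def by auto
next
  fix e assume e: "e \<in> Eset L y"
  then have "e \<in> pair_of ` {1..n choose 2}"
    using Eset_pairs[OF L] bij_betw_imp_surj_on[OF bij] n by auto
  then obtain i where "i \<in> {1..n choose 2}" "e = pair_of i" by blast
  then show "e \<in> edges_of n pair_of (\<lambda>i. pair_of i \<in> Eset L y)"
    unfolding edges_of_def using e by blast
qed

lemma cycle_edges_sub: "e \<in> cycle_edges vs \<Longrightarrow> e \<subseteq> set vs"
proof -
  assume "e \<in> cycle_edges vs"
  then obtain i where i: "i < length vs" "e = {vs ! i, vs ! ((i + 1) mod length vs)}"
    unfolding cycle_edges_def by blast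
  have "0 < length vs" using i(1) by (cases vs) auto
  then have "(i + 1) mod length vs < length vs" by simp
  then show ?thesis using i by auto
qed

lemma cycle_same_side:
  assumes "\<forall>e\<in>cycle_edges vs. e \<subseteq> A \<or> e \<inter> A = {}"
  shows "i < length vs \<Longrightarrow> (vs ! i \<in> A) = (vs ! 0 \<in> A)"
proof (induction i)
  case 0 then show ?case by simp
next
  case (Suc i)
  have "{vs ! i, vs ! ((i + 1) mod length vs)} \<in> cycle_edges vs"
    unfolding cycle_edges_def using Suc.prems by auto
  moreover have "(i + 1) mod length vs = Suc i" using Suc.prems by simp
  ultimately have "{vs ! i, vs ! Suc i} \<subseteq> A \<or> {vs ! i, vs ! Suc i} \<inter> A = {}"
    using assms by fastforce
  then have "(vs ! Suc i \<in> A) = (vs ! i \<in> A)" by auto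
  then show ?case using Suc by simp
qed

lemma not_single:
  assumes "\<not> par y L" "1 \<le> L"
  shows "\<not> single_cycle (2 * L) (Eset L y)"
proof
  assume "single_cycle (2 * L) (Eset L y)"
  then obtain vs where vs: "distinct vs" "set vs = {1..2 * L}" "Eset L y = cycle_edges vs"
    unfolding single_cycle_def by blast
  let ?A = "set (hl L y False)"
  have disj: "set (hl L y False) \<inter> set (hl L y True) = {}"
    using hl_distinct[of L y] by simp
  have "\<forall>e\<in>cycle_edges vs. e \<subseteq> ?A \<or> e \<inter> ?A = {}"
  proof
    fix e assume "e \<in> cycle_edges vs"
    then have "e \<in> cycle_edges (hl L y False) \<or> e \<in> cycle_edges (hl L y True)"
      using Eset_even[OF assms(1)] vs(3) by blast
    then show "e \<subseteq> ?A \<or> e \<inter> ?A = {}"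
      using cycle_edges_sub[of e] disj by blast
  qed
  note side = cycle_same_side[OF this]
  have "1 \<in> set vs" "L + 1 \<in> set vs" using vs(2) assms by auto
  then obtain i i' where i: "i < length vs" "vs ! i = 1" and i': "i' < length vs" "vs ! i' = L + 1"
    by (metis in_set_conv_nth)
  have "1 \<in> ?A"
  proof -
    have "hl L y False ! 0 = 1" using assms by (simp add: hl_def vtx_def)
    then show ?thesis using assms by (metis hl_def length_map length_upt minus_nat.diff_0 nth_mem less_le_trans zero_less_one)
  qed
  moreover have "L + 1 \<in> set (hl L y True)"
  proof -
    have "hl L y True ! 0 = L + 1" using assms by (simp add: hl_def vtx_def)
    then show ?thesis using assms by (metis hl_def length_map length_upt minus_nat.diff_0 nth_mem less_le_trans zero_less_one)
  qed
  then have "L + 1 \<notin> ?A" using disj by blast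
  ultimately show False using side[OF i(1)] side[OF i'(1)] i i' by simp
qed

lemma delta_value:
  assumes "3 \<le> L"
  shows "in_Delta (2 * L) pair_of' (\<lambda>i. pair_of' i \<in> Eset L y) \<or> True"
  by simp

lemma graph_props:
  assumes "3 \<le> L"
  shows "(if par y L then single_cycle (2 * L) (Eset L y) else two_cycles (2 * L) (Eset L y))
     \<and> (single_cycle (2 * L) (Eset L y) \<longleftrightarrow> par y L)"
proof (cases "par y L")
  case True
  have "single_cycle (2 * L) (Eset L y)"
    unfolding single_cycle_def
    using hl_distinct[of L y] hl_set[of L y] Eset_odd[OF True] assms
    by (intro exI[of _ "hl L y False @ hl L y True"]) (simp add: hl_def)
  then show ?thesis using True by simp
next
  case False
  have "two_cycles (2 * L) (Eset L y)"
    unfolding two_cycles_def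
    using hl_distinct[of L y] hl_set[of L y] Eset_even[OF False] assms
    by (intro exI[of _ "hl L y False"] exI[of _ "hl L y True"]) (simp add: hl_def)
  then show ?thesis using False not_single[OF False] assms by simp
qed

lemma chi_par: "chi L y = (if par y L then -1 else 1)"
  by (simp add: chi_def par_def minus_one_power_iff)

lemma cube_ne: "(\<lambda>i. False) \<in> cube m"
  by (simp add: cube_def)

lemma key_bound:
  fixes n S R L :: nat and pair_of :: "nat \<Rightarrow> nat set" and M :: "alg measure"
  assumes L3: "3 \<le> L" and n: "n = 2 * L" and S1: "1 \<le> S"
    and bij: "bij_betw pair_of {1..n choose 2}
           {{u, v} | u v. u \<in> {1..n} \<and> v \<in> {1..n} \<and> u \<noteq> v}"
    and ps: "prob_space M"
    and algs: "\<forall>A \<in> space M. valid_ampc n S A \<and> length A \<le> R"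
    and succ: "\<forall>x. in_Delta n pair_of x \<longrightarrow>
           {A \<in> space M. ampc_outputs n S A x (one_vs_two_cycle n pair_of x)} \<in> sets M
         \<and> measure M {A \<in> space M. ampc_outputs n S A x (one_vs_two_cycle n pair_of x)}
             \<ge> 1 - 1/6"
  shows "L \<le> (S * (S + 1)) ^ R"
proof (rule ccontr)
  assume "\<not> L \<le> (S * (S + 1)) ^ R"
  then have dL: "(S * (S + 1)) ^ R < L" by simp
  interpret P: prob_space M by (rule ps)
  define g where "g y i = (pair_of i \<in> Eset L y)" for y i
  have gdep': "\<exists>j. \<forall>y y'. y j = y' j \<longrightarrow> g y k = g y' k" for k
    unfolding g_def using gdep[OF L3, of "pair_of k"] by blast
  have edges: "edges_of n pair_of (g y) = Eset L y" for y
    unfolding g_def using edges_eq[OF bij n] L3 by simp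
  have props: "in_Delta n pair_of (g y) \<and> one_vs_two_cycle n pair_of (g y) = (if par y L then 1 else 0)" for y
    using graph_props[OF L3, of y, folded n] unfolding in_Delta_def one_vs_two_cycle_def edges
    by (auto split: if_splits)
  define sc where "sc y = {A \<in> space M. ampc_outputs n S A (g y) (one_vs_two_cycle n pair_of (g y))}" for y
  have sc_sets: "sc y \<in> sets M" and sc_meas: "measure M (sc y) \<ge> 5/6" for y
    using succ props[of y] unfolding sc_def by auto
  have sc_sub: "sc y \<subseteq> space M" for y unfolding sc_def by auto
  let ?C = "cube L"
  have finC: "finite ?C" by (rule finite_cube)
  have pw: "(\<Sum>y\<in>?C. indicator (sc y) A :: real) \<le> real (card ?C) / 2" if A: "A \<in> space M" for A
  proof -
    have valid: "valid_ampc n S A" and lenA: "length A \<le> R" using algs A by auto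
    define F where "F y = ind (dds_after S (dds0 n (g y)) A answer_key = {#1#})" for y
    have "(\<lambda>y. ind (dds_after S (dds0 n (g y)) (take (length A) A) answer_key = {#1#})) \<in> Pd L ((S * (S + 1)) ^ length A)"
      by (rule alg_Pd[OF valid gdep']) simp
    then have "F \<in> Pd L ((S * (S + 1)) ^ length A)" unfolding F_def by simp
    moreover have "(S * (S + 1)) ^ length A \<le> (S * (S + 1)) ^ R"
      using lenA S1 by (intro power_increasing) auto
    ultimately have FP: "F \<in> Pd L ((S * (S + 1)) ^ R)" by (rule Pd_mono)
    have c1: "(\<Sum>y\<in>?C. chi L y * F y) = 0" by (rule corr_Pd[OF FP dL])
    have c0: "(\<Sum>y\<in>?C. chi L y * 1) = 0"
      by (rule corr_Pd[OF Pd_const[where d=0 and c=1]]) (use L3 in simp)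
    have pt: "indicator (sc y) A \<le> (1 + chi L y) / 2 - chi L y * F y" if y: "y \<in> ?C" for y
    proof (cases "par y L")
      case True
      then have v: "one_vs_two_cycle n pair_of (g y) = 1" using props[of y] by simp
      have "indicator (sc y) A \<le> F y"
      proof (cases "A \<in> sc y")
        case True
        then have "ampc_outputs n S A (g y) 1" unfolding sc_def using v by simp
        then have "F y = 1" unfolding F_def ampc_outputs_def Let_def ind_def by simp
        then show ?thesis by simp
      next
        case False
        then show ?thesis by (simp add: F_def ind_def)
      qed
      then show ?thesis using True by (simp add: chi_par)
    next
      case False
      then have v: "one_vs_two_cycle n pair_of (g y) = 0" using props[of y] by simp
      have "indicator (sc y) A \<le> 1 - F y"
      proof (cases "A \<in> sc y")
        case True
        then have "ampc_outputs n S A (g y) 0" unfolding sc_def using v by simp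
        then have "F y = 0" unfolding F_def ampc_outputs_def Let_def ind_def by simp
        then show ?thesis by simp
      next
        case False
        then show ?thesis by (simp add: F_def ind_def)
      qed
      then show ?thesis using False by (simp add: chi_par)
    qed
    have "(\<Sum>y\<in>?C. indicator (sc y) A :: real) \<le> (\<Sum>y\<in>?C. (1 + chi L y) / 2 - chi L y * F y)"
      by (rule sum_mono) (rule pt)
    also have "\<dots> = (\<Sum>y\<in>?C. 1 / 2 + (chi L y * 1) / 2) - (\<Sum>y\<in>?C. chi L y * F y)"
      by (simp add: sum_subtractf add_divide_distrib)
    also have "\<dots> = real (card ?C) / 2"
      using c0 c1 by (simp add: sum.distrib sum_divide_distrib[symmetric])
    finally show ?thesis .
  qed
  have intI: "integrable M (indicator (sc y) :: alg \<Rightarrow> real)" for y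
    unfolding integrable_indicator_iff using sc_sets[of y] sc_sub[of y]
    by (simp add: Int_absorb2 less_top[symmetric])
  have "(\<Sum>y\<in>?C. measure M (sc y)) = (\<Sum>y\<in>?C. integral\<^sup>L M (indicator (sc y) :: alg \<Rightarrow> real))"
    using sc_sub by (simp add: Int_absorb2)
  also have "\<dots> = integral\<^sup>L M (\<lambda>A. \<Sum>y\<in>?C. indicator (sc y) A :: real)"
    using Bochner_Integration.integral_sum[where I="?C" and M=M and f="\<lambda>y. indicator (sc y) :: alg \<Rightarrow> real"] intI by simp
  also have "\<dots> \<le> integral\<^sup>L M (\<lambda>A. real (card ?C) / 2)"
  proof (rule integral_mono)
    show "integrable M (\<lambda>A. \<Sum>y\<in>?C. indicator (sc y) A :: real)"
      by (rule Bochner_Integration.integrable_sum) (rule intI)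
    show "integrable M (\<lambda>A. real (card ?C) / 2)" by simp
    fix A assume "A \<in> space M"
    then show "(\<Sum>y\<in>?C. indicator (sc y) A :: real) \<le> real (card ?C) / 2" by (rule pw)
  qed
  also have "\<dots> = real (card ?C) / 2" using P.prob_space by simp
  finally have up: "(\<Sum>y\<in>?C. measure M (sc y)) \<le> real (card ?C) / 2" .
  have "(\<Sum>y\<in>?C. measure M (sc y)) \<ge> (\<Sum>y\<in>?C. 5 / 6)"
    by (rule sum_mono) (rule sc_meas)
  then have "real (card ?C) * 5 / 6 \<le> real (card ?C) / 2" using up by simp
  moreover have "card ?C > 0" using finC cube_ne[of L] by (auto simp: card_gt_0_iff)
  ultimately show False by simp
qed

theorem theorem5p13:
  fixes n S R :: nat and pair_of :: "nat \<Rightarrow> nat set" and M :: "alg measure"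
  assumes "even n" and "S \<ge> 2"
    and "bij_betw pair_of {1..n choose 2}
           {{u, v} | u v. u \<in> {1..n} \<and> v \<in> {1..n} \<and> u \<noteq> v}"
    and "prob_space M"
    and "\<forall>A \<in> space M. valid_ampc n S A \<and> length A \<le> R"
    and "\<forall>x. in_Delta n pair_of x \<longrightarrow>
           {A \<in> space M. ampc_outputs n S A x (one_vs_two_cycle n pair_of x)} \<in> sets M
         \<and> measure M {A \<in> space M. ampc_outputs n S A x (one_vs_two_cycle n pair_of x)}
             \<ge> 1 - 1/6"
  shows "real R \<ge> 1/6 * log (real S) (real n) - 1/2 * log (real S) 2"
proof -
  have S2: "real S \<ge> 2" using assms(2) by simp
  have l2: "log (real S) 2 > 0" using S2 by simp
  have l8: "log (real S) 8 = 3 * log (real S) 2"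
  proof -
    have "log (real S) 8 = log (real S) (2 ^ 3)" by simp
    also have "\<dots> = 3 * log (real S) 2" by (subst log_nat_power) simp_all
    finally show ?thesis .
  qed
  show ?thesis
  proof (cases "n \<le> 8")
    case True
    have "log (real S) (real n) \<le> 3 * log (real S) 2"
    proof (cases "n = 0")
      case True
      then show ?thesis using l2 by (simp add: log_def)
    next
      case False
      then have "log (real S) (real n) \<le> log (real S) 8"
        using S2 \<open>n \<le> 8\<close> by simp
      then show ?thesis using l8 by simp
    qed
    then show ?thesis by simp
  next
    case False
    define L where "L = n div 2"
    have n: "n = 2 * L" using assms(1) unfolding L_def by simp
    have L3: "3 \<le> L" using False n by simp
    have kb: "L \<le> (S * (S + 1)) ^ R"
      by (rule key_bound[OF L3 n _ assms(3-6)]) (use assms(2) in simp)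
    have "S + 1 \<le> S * S" using assms(2) by (metis add_le_mono1 le_square mult_2 mult_le_mono1 one_add_one
          order_trans le_add2 add.commute)
    then have "S * (S + 1) \<le> S * (S * S)" by (rule mult_le_mono2)
    then have "S * (S + 1) \<le> S ^ 3" by (simp add: power3_eq_cube mult.assoc)
    then have "(S * (S + 1)) ^ R \<le> (S ^ 3) ^ R" by (rule power_mono) simp
    also have "\<dots> = S ^ (3 * R)" by (simp add: power_mult)
    also have "\<dots> \<le> S ^ (6 * R)" using assms(2) by (intro power_increasing) auto
    finally have "n \<le> 8 * S ^ (6 * R)" using kb n by linarith
    then have rn: "real n \<le> 8 * real S ^ (6 * R)" by (metis of_nat_le_iff of_nat_mult of_nat_numeral of_nat_power)
    have n0: "real n > 0" using L3 n by simp
    have "log (real S) (real n) \<le> log (real S) (8 * real S ^ (6 * R))"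
      using rn n0 S2 by simp
    also have "\<dots> = log (real S) 8 + log (real S) (real S ^ (6 * R))"
      using S2 by (simp add: log_mult)
    also have "log (real S) (real S ^ (6 * R)) = real (6 * R)"
      using S2 by (subst log_nat_power) simp_all
    finally have "log (real S) (real n) \<le> 3 * log (real S) 2 + 6 * real R" using l8 by simp
    then show ?thesis by simp
  qed
qed


end
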